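(* The exact category $\mathfrak{sl}(2)\text{-}\mathrm{Mod}_{\mathrm{tffr}}$ decomposes as the $\mathrm{Hom}$-orthogonal direct sum of the exact subcategories of generalized Casimir modules: $$\mathfrak{sl}(2)\text{-}\mathrm{Mod}_{\mathrm{tffr}}=\bigoplus_{\mu\in\mathbb{C}}\mathcal C^\bullet_{\mu,\mathrm{tffr}},$$ i.e. every finite rank torsion free module is a finite direct sum of $\mathfrak{sl}(2)$-submodules lying in $\mathcal C^\bullet_{\mu,\mathrm{tffr}}$ for pairwise distinct $\mu$, and $\mathrm{Hom}_{\mathfrak{sl}(2)}(A,B)=0$ for $A\in\mathcal C^\bullet_{\mu,\mathrm{tffr}}$, $B\in\mathcal C^\bullet_{\nu,\mathrm{tffr}}$, $\mu\neq\nu$. This is compatible with the coproduct decomposition $\mathcal C_{\mathrm{tffr}}=\coprod_{\mu\in\mathbb{C}}\mathcal C_{\mu,\mathrm{tffr}}$.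
   Context: $\mathfrak{sl}(2)$ has basis $L_{-1}=f$, $L_0=-\tfrac12 h$, $L_1=-e$ for a Chevalley basis $e,f,h$. Every $\mathfrak{sl}(2)$-module $(V,\rho)$ is a $\mathbb{C}[z]$-module via $z\cdot v=\rho(L_0)v$; $\mathfrak{sl}(2)\text{-}\mathrm{Mod}_{\mathrm{tffr}}$ is the full subcategory of modules that are torsion free as $\mathbb{C}[z]$-modules and of finite rank (finite $\mathbb{C}(z)$-dimension of the localization at $\mathbb{C}[z]\setminus\{0\}$), with the exact structure given by short exact sequences of $\mathfrak{sl}(2)$-modules with all terms in it. Casimir operator: $C_\rho=\rho(L_0)(\rho(L_0)-1)-\rho(L_{-1})\rho(L_1)$. $\mathcal C_{\mu,\mathrm{tffr}}$ (resp. $\mathcal C^\bullet_{\mu,\mathrm{tffr}}$) is the full subcategory of finite rank torsion free modules with $C_\rho=\mu\,\mathrm{Id}$ (resp. $(C_\rho-\mu)^n=0$ for some $n\ge1$); $\mathcal C_{\mathrm{tffr}}$ is the full subcategory of finite rank torsion free modules that are Casimir of some level. *)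

theory Defs
  imports Complex_Main "HOL-Computational_Algebra.Polynomial"
begin

text \<open>An sl(2)-module is modelled as a carrier subspace V of a complex vector space
  (given by a scalar multiplication s satisfying the library locale vector_space),
  together with the three operators Lm = rho(L_(-1)), L0 = rho(L_0), Lp = rho(L_1),
  which are linear on V, preserve V and satisfy [L_m,L_n] = (m-n) L_(m+n) on V.\<close>

definition lin_on :: "(complex \<Rightarrow> 'v::ab_group_add \<Rightarrow> 'v) \<Rightarrow> 'v set \<Rightarrow> ('v \<Rightarrow> 'w::ab_group_add) \<Rightarrow>
    (complex \<Rightarrow> 'w \<Rightarrow> 'w) \<Rightarrow> bool" where
  "lin_on s V f t \<longleftrightarrow>
     (\<forall>x\<in>V. \<forall>y\<in>V. f (x + y) = f x + f y) \<and> (\<forall>c. \<forall>x\<in>V. f (s c x) = t c (f x))"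

definition sl2_module :: "(complex \<Rightarrow> 'v::ab_group_add \<Rightarrow> 'v) \<Rightarrow> 'v set \<Rightarrow>
    ('v \<Rightarrow> 'v) \<Rightarrow> ('v \<Rightarrow> 'v) \<Rightarrow> ('v \<Rightarrow> 'v) \<Rightarrow> bool" where
  "sl2_module s V Lm L0 Lp \<longleftrightarrow>
     vector_space s \<and> module.subspace s V \<and>
     Lm ` V \<subseteq> V \<and> L0 ` V \<subseteq> V \<and> Lp ` V \<subseteq> V \<and>
     lin_on s V Lm s \<and> lin_on s V L0 s \<and> lin_on s V Lp s \<and>
     (\<forall>v\<in>V. L0 (Lm v) - Lm (L0 v) = Lm v) \<and>
     (\<forall>v\<in>V. L0 (Lp v) - Lp (L0 v) = - Lp v) \<and>
     (\<forall>v\<in>V. Lp (Lm v) - Lm (Lp v) = s 2 (L0 v))"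

definition poly_act :: "(complex \<Rightarrow> 'v::ab_group_add \<Rightarrow> 'v) \<Rightarrow> ('v \<Rightarrow> 'v) \<Rightarrow> complex poly \<Rightarrow> 'v \<Rightarrow> 'v" where
  "poly_act s L0 p v = (\<Sum>i\<le>degree p. s (coeff p i) ((L0 ^^ i) v))"

definition torsion_free :: "(complex \<Rightarrow> 'v::ab_group_add \<Rightarrow> 'v) \<Rightarrow> 'v set \<Rightarrow> ('v \<Rightarrow> 'v) \<Rightarrow> bool" where
  "torsion_free s V L0 \<longleftrightarrow> (\<forall>p v. p \<noteq> 0 \<longrightarrow> v \<in> V \<longrightarrow> v \<noteq> 0 \<longrightarrow> poly_act s L0 p v \<noteq> 0)"

definition poly_indep :: "(complex \<Rightarrow> 'v::ab_group_add \<Rightarrow> 'v) \<Rightarrow> ('v \<Rightarrow> 'v) \<Rightarrow> 'v list \<Rightarrow> bool" where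
  "poly_indep s L0 vs \<longleftrightarrow>
     (\<forall>ps. length ps = length vs \<longrightarrow>
        (\<Sum>i<length vs. poly_act s L0 (ps ! i) (vs ! i)) = 0 \<longrightarrow> (\<forall>i<length ps. ps ! i = 0))"

text \<open>Finite rank: bounded number of C[z]-linearly independent elements
  (= finite C(z)-dimension of the localization).\<close>
definition finite_rank :: "(complex \<Rightarrow> 'v::ab_group_add \<Rightarrow> 'v) \<Rightarrow> 'v set \<Rightarrow> ('v \<Rightarrow> 'v) \<Rightarrow> bool" where
  "finite_rank s V L0 \<longleftrightarrow>
     (\<exists>n::nat. \<forall>vs. set vs \<subseteq> V \<longrightarrow> poly_indep s L0 vs \<longrightarrow> length vs \<le> n)"

definition tffr_module :: "(complex \<Rightarrow> 'v::ab_group_add \<Rightarrow> 'v) \<Rightarrow> 'v set \<Rightarrow>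
    ('v \<Rightarrow> 'v) \<Rightarrow> ('v \<Rightarrow> 'v) \<Rightarrow> ('v \<Rightarrow> 'v) \<Rightarrow> bool" where
  "tffr_module s V Lm L0 Lp \<longleftrightarrow>
     sl2_module s V Lm L0 Lp \<and> torsion_free s V L0 \<and> finite_rank s V L0"

definition casimir :: "('v::ab_group_add \<Rightarrow> 'v) \<Rightarrow> ('v \<Rightarrow> 'v) \<Rightarrow> ('v \<Rightarrow> 'v) \<Rightarrow> 'v \<Rightarrow> 'v" where
  "casimir Lm L0 Lp v = L0 (L0 v) - L0 v - Lm (Lp v)"

definition gen_casimir_tffr :: "complex \<Rightarrow> (complex \<Rightarrow> 'v::ab_group_add \<Rightarrow> 'v) \<Rightarrow> 'v set \<Rightarrow>
    ('v \<Rightarrow> 'v) \<Rightarrow> ('v \<Rightarrow> 'v) \<Rightarrow> ('v \<Rightarrow> 'v) \<Rightarrow> bool" where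
  "gen_casimir_tffr \<mu> s V Lm L0 Lp \<longleftrightarrow>
     tffr_module s V Lm L0 Lp \<and>
     (\<exists>n::nat. n \<ge> 1 \<and>
        (\<forall>v\<in>V. ((\<lambda>x. casimir Lm L0 Lp x - s \<mu> x) ^^ n) v = 0))"

definition sl2_submodule :: "(complex \<Rightarrow> 'v::ab_group_add \<Rightarrow> 'v) \<Rightarrow> 'v set \<Rightarrow> 'v set \<Rightarrow>
    ('v \<Rightarrow> 'v) \<Rightarrow> ('v \<Rightarrow> 'v) \<Rightarrow> ('v \<Rightarrow> 'v) \<Rightarrow> bool" where
  "sl2_submodule s W V Lm L0 Lp \<longleftrightarrow>
     W \<subseteq> V \<and> module.subspace s W \<and> Lm ` W \<subseteq> W \<and> L0 ` W \<subseteq> W \<and> Lp ` W \<subseteq> W"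

definition sl2_hom :: "(complex \<Rightarrow> 'a::ab_group_add \<Rightarrow> 'a) \<Rightarrow> 'a set \<Rightarrow>
    ('a \<Rightarrow> 'a) \<Rightarrow> ('a \<Rightarrow> 'a) \<Rightarrow> ('a \<Rightarrow> 'a) \<Rightarrow>
    (complex \<Rightarrow> 'b::ab_group_add \<Rightarrow> 'b) \<Rightarrow> 'b set \<Rightarrow>
    ('b \<Rightarrow> 'b) \<Rightarrow> ('b \<Rightarrow> 'b) \<Rightarrow> ('b \<Rightarrow> 'b) \<Rightarrow> ('a \<Rightarrow> 'b) \<Rightarrow> bool" where
  "sl2_hom sA A Am A0 Ap sB B Bm B0 Bp f \<longleftrightarrow>
     f ` A \<subseteq> B \<and> lin_on sA A f sB \<and>
     (\<forall>v\<in>A. f (Am v) = Bm (f v)) \<and> (\<forall>v\<in>A. f (A0 v) = B0 (f v)) \<and>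
     (\<forall>v\<in>A. f (Ap v) = Bp (f v))"

end

theory Submission
  imports Defs "HOL-Computational_Algebra.Computational_Algebra" "HOL-Computational_Algebra.Field_as_Ring"
begin

locale vsV = vector_space s for s :: "complex \<Rightarrow> 'v::ab_group_add \<Rightarrow> 'v" +
  fixes V :: "'v set"
  assumes subV: "subspace V"
begin

definition lop :: "('v \<Rightarrow> 'v) \<Rightarrow> bool" where
  "lop T \<longleftrightarrow> T ` V \<subseteq> V \<and> lin_on s V T s"

lemma V0[simp]: "0 \<in> V" using subV subspace_0 by blast
lemma Vadd[simp]: "x \<in> V \<Longrightarrow> y \<in> V \<Longrightarrow> x + y \<in> V" using subV subspace_add by blast
lemma Vdiff[simp]: "x \<in> V \<Longrightarrow> y \<in> V \<Longrightarrow> x - y \<in> V" using subV subspace_diff by blast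
lemma Vneg[simp]: "x \<in> V \<Longrightarrow> - x \<in> V" using subV subspace_neg by blast
lemma Vscale[simp]: "x \<in> V \<Longrightarrow> s c x \<in> V" using subV subspace_scale by blast
lemma Vsum[simp]: "(\<And>i. i \<in> A \<Longrightarrow> f i \<in> V) \<Longrightarrow> sum f A \<in> V" using subV subspace_sum by blast

lemma lopI: "(\<And>v. v \<in> V \<Longrightarrow> T v \<in> V) \<Longrightarrow> (\<And>x y. x \<in> V \<Longrightarrow> y \<in> V \<Longrightarrow> T (x + y) = T x + T y)
  \<Longrightarrow> (\<And>c x. x \<in> V \<Longrightarrow> T (s c x) = s c (T x)) \<Longrightarrow> lop T"
  unfolding lop_def lin_on_def by auto

context fixes T assumes T: "lop T"
begin
lemma lop_in[simp]: "v \<in> V \<Longrightarrow> T v \<in> V" using T unfolding lop_def by auto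
lemma lop_add[simp]: "x \<in> V \<Longrightarrow> y \<in> V \<Longrightarrow> T (x + y) = T x + T y" using T unfolding lop_def lin_on_def by auto
lemma lop_scale[simp]: "x \<in> V \<Longrightarrow> T (s c x) = s c (T x)" using T unfolding lop_def lin_on_def by auto
lemma lop_0[simp]: "T 0 = 0"
  using lop_scale[of 0 0] by simp
lemma lop_neg[simp]: "x \<in> V \<Longrightarrow> T (- x) = - T x"
  using lop_scale[of x "-1"] by simp
lemma lop_diff[simp]: "x \<in> V \<Longrightarrow> y \<in> V \<Longrightarrow> T (x - y) = T x - T y"
  using lop_add[of x "-y"] by (simp del: lop_add)
lemma lop_sum[simp]: "(\<And>i. i \<in> A \<Longrightarrow> f i \<in> V) \<Longrightarrow> T (sum f A) = (\<Sum>i\<in>A. T (f i))"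
  by (induct A rule: infinite_finite_induct) auto
lemma lop_pow_in[simp]: "v \<in> V \<Longrightarrow> (T ^^ n) v \<in> V"
  by (induct n) auto
lemma lop_pow: "lop (T ^^ n)"
proof (induct n)
  case 0 then show ?case by (intro lopI) auto
next
  case (Suc n)
  interpret n: vsV s V by unfold_locales
  show ?case apply (intro lopI) using Suc by (auto simp: lop_def lin_on_def)
qed
end

lemma lop_id: "lop (\<lambda>v. v)" by (intro lopI) auto
lemma lop_comp: "lop T \<Longrightarrow> lop S \<Longrightarrow> lop (\<lambda>v. T (S v))" by (intro lopI) auto
lemma lop_plus: "lop T \<Longrightarrow> lop S \<Longrightarrow> lop (\<lambda>v. T v + S v)"
  by (intro lopI) (auto simp: algebra_simps)
lemma lop_minus: "lop T \<Longrightarrow> lop S \<Longrightarrow> lop (\<lambda>v. T v - S v)"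
  by (intro lopI) (auto simp: algebra_simps)
lemma lop_smul: "lop (\<lambda>v. s c v)" by (intro lopI) (auto simp: algebra_simps)

lemma pow_comm: "lop T \<Longrightarrow> lop S \<Longrightarrow> (\<And>v. v \<in> V \<Longrightarrow> S (T v) = T (S v)) \<Longrightarrow> v \<in> V \<Longrightarrow>
   S ((T ^^ n) v) = (T ^^ n) (S v)"
  by (induct n arbitrary: v) auto

lemma pow_comm2: "lop T \<Longrightarrow> lop S \<Longrightarrow> (\<And>v. v \<in> V \<Longrightarrow> S (T v) = T (S v)) \<Longrightarrow> v \<in> V \<Longrightarrow>
   (S ^^ m) ((T ^^ n) v) = (T ^^ n) ((S ^^ m) v)"
  apply (rule pow_comm[OF _ lop_pow]) apply auto
  apply (rule pow_comm[symmetric]) by auto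

lemma pow_cong: "lop T \<Longrightarrow> (\<And>v. v \<in> V \<Longrightarrow> S v = T v) \<Longrightarrow> v \<in> V \<Longrightarrow> (S ^^ n) v = (T ^^ n) v"
  by (induct n arbitrary: v) auto

end

context vsV
begin

abbreviation pa where "pa T p v \<equiv> poly_act s T p v"

lemma pa_bound: "degree p < n \<Longrightarrow> pa T p v = (\<Sum>i<n. s (coeff p i) ((T ^^ i) v))"
  unfolding poly_act_def
  by (rule sum.mono_neutral_left) (auto simp: coeff_eq_0)

lemma pa_add: "pa T (p + q) v = pa T p v + pa T q v"
proof -
  let ?n = "Suc (max (degree p) (degree q))"
  have "degree (p + q) < ?n" using degree_add_le_max[of p q] by simp
  moreover have "degree p < ?n" "degree q < ?n" by auto
  ultimately show ?thesis using pa_bound[where n="?n"]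
    by (simp add: scale_left_distrib sum.distrib del: sum.lessThan_Suc)
qed

lemma pa_smult: "pa T (smult a p) v = s a (pa T p v)"
proof -
  let ?n = "Suc (degree p)"
  have "degree p < ?n" "degree (smult a p) < ?n" by auto
  then show ?thesis using pa_bound[where n="?n"]
    by (simp add: scale_sum_right del: sum.lessThan_Suc)
qed

lemma pa_0[simp]: "pa T 0 v = 0" by (simp add: poly_act_def)
lemma pa_const[simp]: "pa T [:c:] v = s c v" by (simp add: poly_act_def)
lemma pa_1[simp]: "pa T 1 v = v" by (simp add: poly_act_def one_pCons)

lemma pa_neg: "pa T (- p) v = - pa T p v"
  using pa_smult[of T "-1" p v] by simp

lemma pa_diff: "pa T (p - q) v = pa T p v - pa T q v"
  using pa_add[of T p "-q" v] pa_neg[of T q v] by simp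

lemma pa_sum: "pa T (sum f A) v = (\<Sum>i\<in>A. pa T (f i) v)"
  by (induct A rule: infinite_finite_induct) (auto simp: pa_add)

context fixes T assumes T: "lop T"
begin

lemma pa_in[simp]: "v \<in> V \<Longrightarrow> pa T p v \<in> V"
  unfolding poly_act_def using T by auto

lemma lop_pa: "lop (pa T p)"
proof (rule lopI)
  fix x y assume "x \<in> V" "y \<in> V"
  then show "pa T p (x + y) = pa T p x + pa T p y"
    unfolding poly_act_def using T lop_add[OF lop_pow[OF T]]
    by (simp add: sum.distrib scale_right_distrib)
next
  fix c x assume "x \<in> V"
  then show "pa T p (s c x) = s c (pa T p x)"
    unfolding poly_act_def using T lop_scale[OF lop_pow[OF T]]
    by (simp add: scale_sum_right mult.commute)
qed (use T in auto)

lemma pa_pCons: "v \<in> V \<Longrightarrow> pa T (pCons a p) v = s a v + T (pa T p v)"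
proof -
  assume v: "v \<in> V"
  let ?n = "Suc (degree p)"
  have d: "degree (pCons a p) < Suc ?n" by (simp add: degree_pCons_le le_imp_less_Suc)
  have "pa T (pCons a p) v = (\<Sum>i<Suc ?n. s (coeff (pCons a p) i) ((T ^^ i) v))"
    by (rule pa_bound[OF d])
  also have "\<dots> = s a v + (\<Sum>i<?n. s (coeff p i) ((T ^^ Suc i) v))"
    by (simp add: sum.lessThan_Suc_shift del: sum.lessThan_Suc)
  also have "(\<Sum>i<?n. s (coeff p i) ((T ^^ Suc i) v)) = T (pa T p v)"
    using pa_bound[where p=p and n="?n" and T=T and v=v] v T by (simp del: sum.lessThan_Suc)
  finally show ?thesis .
qed

lemma pa_X: "v \<in> V \<Longrightarrow> pa T [:a, 1:] v = s a v + T v"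
  using pa_pCons[of v a 1] by (simp add: one_pCons[symmetric])

lemma pa_mult: "v \<in> V \<Longrightarrow> pa T (p * q) v = pa T p (pa T q v)"
proof (induct p arbitrary: v)
  case 0 then show ?case by simp
next
  case (pCons a p)
  have "pa T (pCons a p * q) v = s a (pa T q v) + pa T (pCons 0 (p * q)) v"
    by (simp add: pa_add pa_smult)
  also have "pa T (pCons 0 (p * q)) v = T (pa T p (pa T q v))"
    using pCons by (simp add: pa_pCons)
  also have "s a (pa T q v) + T (pa T p (pa T q v)) = pa T (pCons a p) (pa T q v)"
    using pCons by (simp add: pa_pCons)
  finally show ?case .
qed

lemma pa_power: "v \<in> V \<Longrightarrow> pa T (p ^ n) v = (pa T p ^^ n) v"
  by (induct n arbitrary: v) (auto simp: pa_mult)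

lemma pa_comm: assumes S: "lop S" and c: "\<And>v. v \<in> V \<Longrightarrow> S (T v) = T (S v)" and v: "v \<in> V" 
  shows "S (pa T p v) = pa T p (S v)"
  unfolding poly_act_def using T S v by (simp add: pow_comm[OF T S c])

lemma pa_shift:
  assumes S: "lop S" and rel: "\<And>v. v \<in> V \<Longrightarrow> T (S v) = S (T v) + s a (S v)"
  shows "v \<in> V \<Longrightarrow> pa T (pcompose p [:-a, 1:]) (S v) = S (pa T p v)"
proof (induct p arbitrary: v)
  case 0 then show ?case using S by simp
next
  case (pCons b p)
  have "pa T (pcompose (pCons b p) [:-a, 1:]) (S v)
     = s b (S v) + pa T [:-a,1:] (pa T (pcompose p [:- a, 1:]) (S v))"
    using pCons S by (simp only: pcompose_pCons pa_add pa_mult pa_const lop_in)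
  also have "\<dots> = s b (S v) + (s (-a) (S (pa T p v)) + T (S (pa T p v)))"
    using pCons S by (simp add: pa_X)
  also have "\<dots> = S (pa T (pCons b p) v)"
    using pCons S T by (simp add: pa_pCons rel)
  finally show ?case .
qed

end
end

context vsV
begin

end

context vsV
begin

lemma nil_inj:
  assumes N: "lop N" and w: "w \<in> V" and m: "(N ^^ m) w = 0"
    and n: "((\<lambda>v. N v + s c v) ^^ n) w = 0" and c: "c \<noteq> 0"
  shows "w = 0"
proof -
  let ?P = "\<lambda>v. N v + s c v"
  have P: "lop ?P" by (rule lop_plus[OF N lop_smul])
  have NP: "\<And>v. v \<in> V \<Longrightarrow> N (?P v) = ?P (N v)" using N by simp
  have "(N ^^ (m - j)) w = 0" for j
  proof (induct j)
    case 0 then show ?case using m by simp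
  next
    case (Suc j)
    show ?case
    proof (cases "m - Suc j = m - j")
      case True then show ?thesis using Suc by simp
    next
      case False
      then obtain k where k: "m - j = Suc k" "m - Suc j = k" by (cases "m - j") auto
      define u where "u = (N ^^ k) w"
      have u: "u \<in> V" unfolding u_def using N w by simp
      have Nu: "N u = 0" using Suc k unfolding u_def by simp
      have "(?P ^^ i) u = s (c ^ i) u" for i
      proof (induct i)
        case 0 show ?case by simp
      next
        case (Suc i)
        have "(?P ^^ Suc i) u = N (s (c ^ i) u) + s c (s (c ^ i) u)" using Suc by simp
        also have "\<dots> = s (c ^ Suc i) u" using N u Nu by simp
        finally show ?case .
      qed
      moreover have "(?P ^^ n) u = (N ^^ k) ((?P ^^ n) w)"
        unfolding u_def by (rule pow_comm2[OF N P, where v=w and m=n and n=k]) (use N w in simp_all)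
      ultimately have "s (c ^ n) u = 0" using n lop_0[OF lop_pow[OF N]] by simp
      then have "u = 0" using c by simp
      then show ?thesis using k unfolding u_def by simp
    qed
  qed
  from this[of m] show ?thesis by simp
qed
end

locale sl2 = vsV s V for s :: "complex \<Rightarrow> 'v::ab_group_add \<Rightarrow> 'v" and V +
  fixes Lm L0 Lp
  assumes sl2: "sl2_module s V Lm L0 Lp"
begin

lemma lLm: "lop Lm" and lL0: "lop L0" and lLp: "lop Lp"
  using sl2 unfolding sl2_module_def lop_def by blast+

lemmas ops = lLm lL0 lLp
lemmas ops_simps = lop_in[OF lLm] lop_in[OF lL0] lop_in[OF lLp]
  lop_add[OF lLm] lop_add[OF lL0] lop_add[OF lLp]
  lop_diff[OF lLm] lop_diff[OF lL0] lop_diff[OF lLp]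
  lop_neg[OF lLm] lop_neg[OF lL0] lop_neg[OF lLp]
  lop_scale[OF lLm] lop_scale[OF lL0] lop_scale[OF lLp]

lemma r0m: "v \<in> V \<Longrightarrow> L0 (Lm v) = Lm (L0 v) + Lm v"
  and r0p: "v \<in> V \<Longrightarrow> L0 (Lp v) = Lp (L0 v) - Lp v"
  and rpm: "v \<in> V \<Longrightarrow> Lp (Lm v) = Lm (Lp v) + (L0 v + L0 v)"
proof -
  assume v: "v \<in> V"
  have "s 2 (L0 v) = L0 v + L0 v"
    using scale_left_distrib[of 1 1 "L0 v"] by simp
  then show "L0 (Lm v) = Lm (L0 v) + Lm v" "L0 (Lp v) = Lp (L0 v) - Lp v"
    "Lp (Lm v) = Lm (Lp v) + (L0 v + L0 v)"
    using sl2 v unfolding sl2_module_def by (simp_all add: eq_diff_eq diff_eq_eq)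
qed

definition Cas where "Cas = casimir Lm L0 Lp"

lemma Cas_def2: "Cas v = L0 (L0 v) - L0 v - Lm (Lp v)"
  unfolding Cas_def casimir_def by simp

lemma lCas: "lop Cas"
  by (rule lopI) (simp_all add: Cas_def2 ops_simps algebra_simps)

lemma Cas_L0: "v \<in> V \<Longrightarrow> Cas (L0 v) = L0 (Cas v)"
proof -
  assume v: "v \<in> V"
  have "L0 (Lm (Lp v)) = Lm (L0 (Lp v)) + Lm (Lp v)" using v by (simp add: r0m ops_simps)
  also have "\<dots> = Lm (Lp (L0 v))" using v by (simp add: r0p ops_simps)
  finally show ?thesis unfolding Cas_def2 using v by (simp add: ops_simps)
qed

lemma Cas_Lp: "v \<in> V \<Longrightarrow> Cas (Lp v) = Lp (Cas v)"
proof -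
  assume v: "v \<in> V"
  have e1: "L0 (Lp v) = Lp (L0 v) - Lp v" using v by (rule r0p)
  have e2: "L0 (L0 (Lp v)) = Lp (L0 (L0 v)) - Lp (L0 v) - (Lp (L0 v) - Lp v)"
    using v by (simp add: e1 ops_simps r0p[OF lop_in[OF lL0 v]])
  have e3: "Lp (Lm (Lp v)) = Lm (Lp (Lp v)) + (L0 (Lp v) + L0 (Lp v))" using v by (simp add: rpm ops_simps)
  show ?thesis unfolding Cas_def2 using v
    by (simp add: e1 e3 ops_simps algebra_simps r0p[OF lop_in[OF lL0 v]] r0m[OF lop_in[OF lL0 v]])
qed

lemma Cas_Lm: "v \<in> V \<Longrightarrow> Cas (Lm v) = Lm (Cas v)"
proof -
  assume v: "v \<in> V"
  have e1: "L0 (Lm v) = Lm (L0 v) + Lm v" using v by (rule r0m)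
  have e2: "L0 (L0 (Lm v)) = Lm (L0 (L0 v)) + Lm (L0 v) + (Lm (L0 v) + Lm v)"
    using v by (simp add: e1 ops_simps r0m[OF lop_in[OF lL0 v]])
  have e3: "Lm (Lp (Lm v)) = Lm (Lm (Lp v)) + (Lm (L0 v) + Lm (L0 v))" using v by (simp add: rpm ops_simps)
  show ?thesis unfolding Cas_def2 using v
    by (simp add: e1 e3 ops_simps algebra_simps r0p[OF lop_in[OF lL0 v]] r0m[OF lop_in[OF lL0 v]])
qed

lemma LpLm: "v \<in> V \<Longrightarrow> Lp (Lm v) = L0 (L0 v) + L0 v - Cas v"
  unfolding Cas_def2 using rpm[of v] by (simp add: algebra_simps)

lemma LmLp: "v \<in> V \<Longrightarrow> Lm (Lp v) = L0 (L0 v) - L0 v - Cas v"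
  unfolding Cas_def2 by simp

end

lemma degree_map_poly_le: "f 0 = 0 \<Longrightarrow> degree (map_poly f p) \<le> degree p"
  by (rule degree_le) (auto simp: coeff_map_poly coeff_eq_0)

context sl2
begin

definition bpa :: "complex poly poly \<Rightarrow> 'v \<Rightarrow> 'v" where
  "bpa Q v = (\<Sum>k\<le>degree Q. pa L0 (coeff Q k) ((Cas ^^ k) v))"

lemma bpa_bound: "degree Q < n \<Longrightarrow> bpa Q v = (\<Sum>k<n. pa L0 (coeff Q k) ((Cas ^^ k) v))"
  unfolding bpa_def
  by (rule sum.mono_neutral_left) (auto simp: coeff_eq_0)

lemma bpa_0[simp]: "bpa 0 v = 0" by (simp add: bpa_def)

lemma bpa_add: "bpa (P + Q) v = bpa P v + bpa Q v"
proof -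
  let ?n = "Suc (max (degree P) (degree Q))"
  have "degree (P + Q) < ?n" using degree_add_le_max[of P Q] by simp
  moreover have "degree P < ?n" "degree Q < ?n" by auto
  ultimately show ?thesis using bpa_bound[where n="?n"]
    by (simp add: pa_add sum.distrib del: sum.lessThan_Suc)
qed

lemma bpa_neg: "bpa (- P) v = - bpa P v"
  using bpa_add[of P "-P" v] by (simp add: eq_neg_iff_add_eq_0 add.commute)

lemma bpa_diff: "bpa (P - Q) v = bpa P v - bpa Q v"
  using bpa_add[of P "-Q" v] bpa_neg[of Q v] by simp

lemma bpa_in[simp]: "v \<in> V \<Longrightarrow> bpa Q v \<in> V"
  unfolding bpa_def using lL0 lCas by (simp add: pa_in)

lemma pa_L0_Cas: "v \<in> V \<Longrightarrow> Cas (pa L0 p v) = pa L0 p (Cas v)"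
  by (rule pa_comm[OF lL0 lCas]) (auto simp: Cas_L0)

lemma pa_L0_Casp: "v \<in> V \<Longrightarrow> pa L0 p ((Cas ^^ k) v) = (Cas ^^ k) (pa L0 p v)"
  by (rule pow_comm[OF lCas lop_pa[OF lL0]]) (auto simp: pa_L0_Cas)

lemma lop_bpa: "lop (bpa Q)"
proof (rule lopI)
  fix x y assume "x \<in> V" "y \<in> V"
  then show "bpa Q (x + y) = bpa Q x + bpa Q y"
    unfolding bpa_def using lop_add[OF lop_pa[OF lL0]] lop_add[OF lop_pow[OF lCas]] lop_pow_in[OF lCas]
    by (simp add: sum.distrib)
next
  fix c x assume "x \<in> V"
  then show "bpa Q (s c x) = s c (bpa Q x)"
    unfolding bpa_def using lop_scale[OF lop_pa[OF lL0]] lop_scale[OF lop_pow[OF lCas]] lop_pow_in[OF lCas]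
    by (simp add: scale_sum_right)
qed simp

lemma bpa_smult: "v \<in> V \<Longrightarrow> bpa (smult a Q) v = pa L0 a (bpa Q v)"
proof -
  assume v: "v \<in> V"
  let ?n = "Suc (degree Q)"
  have d: "degree (smult a Q) < ?n" "degree Q < ?n" by auto
  have "bpa (smult a Q) v = (\<Sum>k<?n. pa L0 a (pa L0 (coeff Q k) ((Cas ^^ k) v)))"
    using bpa_bound[OF d(1)] v lCas by (simp add: pa_mult[OF lL0] del: sum.lessThan_Suc)
  also have "\<dots> = pa L0 a (bpa Q v)"
    using bpa_bound[OF d(2)] v lCas lL0 by (simp add: pa_in lop_pa del: sum.lessThan_Suc)
  finally show ?thesis .
qed

lemma bpa_pCons: "v \<in> V \<Longrightarrow> bpa (pCons a Q) v = pa L0 a v + Cas (bpa Q v)"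
proof -
  assume v: "v \<in> V"
  let ?n = "Suc (degree Q)"
  have d: "degree (pCons a Q) < Suc ?n" by (simp add: degree_pCons_le le_imp_less_Suc)
  have "bpa (pCons a Q) v = (\<Sum>k<Suc ?n. pa L0 (coeff (pCons a Q) k) ((Cas ^^ k) v))"
    by (rule bpa_bound[OF d])
  also have "\<dots> = pa L0 a v + (\<Sum>k<?n. pa L0 (coeff Q k) (Cas ((Cas ^^ k) v)))"
    by (simp add: sum.lessThan_Suc_shift del: sum.lessThan_Suc)
  also have "(\<Sum>k<?n. pa L0 (coeff Q k) (Cas ((Cas ^^ k) v))) = Cas (bpa Q v)"
    using bpa_bound[where Q=Q and n="?n" and v=v] v lCas lL0
    by (simp add: pa_L0_Cas pa_in del: sum.lessThan_Suc)
  finally show ?thesis .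
qed

lemma bpa_mult: "v \<in> V \<Longrightarrow> bpa (P * Q) v = bpa P (bpa Q v)"
proof (induct P arbitrary: v)
  case 0 then show ?case by simp
next
  case (pCons a P)
  have "bpa (pCons a P * Q) v = pa L0 a (bpa Q v) + bpa (pCons 0 (P * Q)) v"
    using pCons by (simp add: bpa_add bpa_smult)
  also have "bpa (pCons 0 (P * Q)) v = Cas (bpa P (bpa Q v))"
    using pCons by (simp add: bpa_pCons)
  also have "pa L0 a (bpa Q v) + Cas (bpa P (bpa Q v)) = bpa (pCons a P) (bpa Q v)"
    using pCons by (simp add: bpa_pCons)
  finally show ?case .
qed

lemma bpa_comm:
  assumes S: "lop S" and c0: "\<And>v. v \<in> V \<Longrightarrow> S (L0 v) = L0 (S v)"
    and cC: "\<And>v. v \<in> V \<Longrightarrow> S (Cas v) = Cas (S v)" and v: "v \<in> V"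
  shows "S (bpa Q v) = bpa Q (S v)"
proof -
  have "S (pa L0 (coeff Q k) ((Cas ^^ k) v)) = pa L0 (coeff Q k) ((Cas ^^ k) (S v))" for k
    using pa_comm[OF lL0 S c0] pow_comm[OF lCas S cC] v lCas by simp
  then show ?thesis unfolding bpa_def using S v lL0 lCas by (simp add: pa_in)
qed

lemma bpa_shift:
  assumes S: "lop S" and c0: "\<And>v. v \<in> V \<Longrightarrow> L0 (S v) = S (L0 v) + s a (S v)"
    and cC: "\<And>v. v \<in> V \<Longrightarrow> S (Cas v) = Cas (S v)" and v: "v \<in> V"
  shows "bpa (map_poly (\<lambda>q. pcompose q [:-a, 1:]) Q) (S v) = S (bpa Q v)"
proof -
  let ?n = "Suc (degree Q)"
  have d: "degree (map_poly (\<lambda>q. pcompose q [:-a, 1:]) Q) < ?n" "degree Q < ?n"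
    using degree_map_poly_le[of "\<lambda>q. pcompose q [:-a, 1:]" Q] by (auto simp: pcompose_0)
  have "pa L0 (pcompose (coeff Q k) [:-a, 1:]) ((Cas ^^ k) (S v)) = S (pa L0 (coeff Q k) ((Cas ^^ k) v))" for k
  proof -
    have "(Cas ^^ k) (S v) = S ((Cas ^^ k) v)" using pow_comm[OF lCas S cC v] by simp
    then show ?thesis using pa_shift[OF lL0 S c0] v lCas by simp
  qed
  then show ?thesis using bpa_bound[OF d(1)] bpa_bound[OF d(2)] S v lL0 lCas
    by (simp add: coeff_map_poly pa_in del: sum.lessThan_Suc)
qed

lemma bpa_constcoeff: "v \<in> V \<Longrightarrow> bpa (map_poly (\<lambda>c. [:c:]) q) v = pa Cas q v"
proof -
  assume v: "v \<in> V"
  let ?n = "Suc (degree q)"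
  have d: "degree (map_poly (\<lambda>c. [:c:]) q) < ?n" "degree q < ?n"
    using degree_map_poly_le[of "\<lambda>c. [:c:]" q] by auto
  show ?thesis using bpa_bound[OF d(1)] pa_bound[OF d(2)]
    by (simp add: coeff_map_poly del: sum.lessThan_Suc)
qed

end

locale tffr = sl2 s V Lm L0 Lp for s :: "complex \<Rightarrow> 'v::ab_group_add \<Rightarrow> 'v" and V Lm L0 Lp +
  assumes tf: "torsion_free s V L0" and fr: "finite_rank s V L0"
begin

lemma tfD: "p \<noteq> 0 \<Longrightarrow> v \<in> V \<Longrightarrow> pa L0 p v = 0 \<Longrightarrow> v = 0"
  using tf unfolding torsion_free_def by blast

definition Ann where "Ann = {Q. \<forall>v\<in>V. bpa Q v = 0}"

lemma Ann_mult: "Q \<in> Ann \<Longrightarrow> R * Q \<in> Ann"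
  unfolding Ann_def using lop_0[OF lop_bpa] by (simp add: bpa_mult)

lemma Ann_mult2: "Q \<in> Ann \<Longrightarrow> Q * R \<in> Ann"
  using Ann_mult[of Q R] by (simp add: mult.commute)

lemma Ann_diff: "Q \<in> Ann \<Longrightarrow> R \<in> Ann \<Longrightarrow> Q - R \<in> Ann"
  unfolding Ann_def by (simp add: bpa_diff)

lemma Ann_smult: "Q \<in> Ann \<Longrightarrow> smult a Q \<in> Ann"
  unfolding Ann_def using lop_0[OF lop_pa[OF lL0]] by (simp add: bpa_smult)

lemma Ann_sat: "smult p Q \<in> Ann \<Longrightarrow> p \<noteq> 0 \<Longrightarrow> Q \<in> Ann"
  unfolding Ann_def using tfD by (simp add: bpa_smult)

lemma bpa_const: "v \<in> V \<Longrightarrow> bpa [:p:] v = pa L0 p v"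
  using bpa_pCons[of v p 0] lCas by simp

lemma bpa_g: "v \<in> V \<Longrightarrow> bpa [:[:0,1,1:], -1:] v = Lp (Lm v)"
proof -
  assume v: "v \<in> V"
  have "bpa [:[:0,1,1:], -1:] v = pa L0 [:0,1,1:] v + Cas (pa L0 (-1) v)"
    using v bpa_pCons bpa_const by simp
  also have "pa L0 [:0,1,1:] v = L0 (v + L0 v)"
    using v lL0 by (simp add: pa_pCons[OF lL0] pa_X[OF lL0])
  also have "pa L0 (-1) v = - v" using pa_neg[of L0 1 v] by simp
  finally show ?thesis using v lCas lL0 by (simp add: LpLm algebra_simps)
qed

lemma bpa_g': "v \<in> V \<Longrightarrow> bpa [:[:0,-1,1:], -1:] v = Lm (Lp v)"
proof -
  assume v: "v \<in> V"
  have "bpa [:[:0,-1,1:], -1:] v = pa L0 [:0,-1,1:] v + Cas (pa L0 (-1) v)"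
    using v bpa_pCons bpa_const by simp
  also have "pa L0 [:0,-1,1:] v = L0 (s (-1) v + L0 v)"
    using v lL0 by (simp add: pa_pCons[OF lL0] pa_X[OF lL0])
  also have "pa L0 (-1) v = - v" using pa_neg[of L0 1 v] by simp
  finally show ?thesis using v lCas lL0 by (simp add: LmLp algebra_simps)
qed

lemma Ann_shift: assumes QA: "Q \<in> Ann" shows "map_poly (\<lambda>q. pcompose q [:1, 1:]) Q * [:[:0,1,1:], -1:] \<in> Ann"
  unfolding Ann_def
proof (intro CollectI ballI)
  fix v assume v: "v \<in> V"
  have Q: "\<forall>v\<in>V. bpa Q v = 0" using QA unfolding Ann_def by simp
  have "bpa (map_poly (\<lambda>q. pcompose q [:1, 1:]) Q * [:[:0,1,1:], -1:]) v
     = bpa (map_poly (\<lambda>q. pcompose q [:- (-1), 1:]) Q) (Lp (Lm v))"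
    using v by (simp only: bpa_mult bpa_g minus_minus)
  also have "\<dots> = Lp (bpa Q (Lm v))"
    by (rule bpa_shift[OF lLp]) (use v r0p lLm Cas_Lp in auto)
  also have "\<dots> = 0" using Q v lLm lLp by simp
  finally show "bpa (map_poly (\<lambda>q. pcompose q [:1, 1:]) Q * [:[:0,1,1:], -1:]) v = 0" .
qed

lemma Ann_shift': assumes QA: "Q \<in> Ann" shows "map_poly (\<lambda>q. pcompose q [:-1, 1:]) Q * [:[:0,-1,1:], -1:] \<in> Ann"
  unfolding Ann_def
proof (intro CollectI ballI)
  fix v assume v: "v \<in> V"
  have Q: "\<forall>v\<in>V. bpa Q v = 0" using QA unfolding Ann_def by simp
  have "bpa (map_poly (\<lambda>q. pcompose q [:-1, 1:]) Q * [:[:0,-1,1:], -1:]) v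
     = bpa (map_poly (\<lambda>q. pcompose q [:- 1, 1:]) Q) (Lm (Lp v))"
    using v by (simp only: bpa_mult bpa_g')
  also have "\<dots> = Lm (bpa Q (Lp v))"
    by (rule bpa_shift[OF lLm]) (use v r0m lLp Cas_Lm in auto)
  also have "\<dots> = 0" using Q v lLm lLp by simp
  finally show "bpa (map_poly (\<lambda>q. pcompose q [:-1, 1:]) Q * [:[:0,-1,1:], -1:]) v = 0" .
qed

lemma bpa_pa_comm: "v \<in> V \<Longrightarrow> bpa Q (pa L0 p v) = pa L0 p (bpa Q v)"
proof -
  assume v: "v \<in> V"
  have "bpa Q (pa L0 p v) = bpa (Q * [:p:]) v" using v by (simp only: bpa_mult bpa_const)
  also have "\<dots> = bpa ([:p:] * Q) v" by (simp only: mult.commute)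
  also have "\<dots> = pa L0 p (bpa Q v)" using v by (simp only: bpa_mult bpa_const bpa_in)
  finally show ?thesis .
qed

lemma rel_exists: assumes e: "e \<in> V" shows "\<exists>Q. Q \<noteq> 0 \<and> bpa Q e = 0"
proof -
  obtain n where n: "\<forall>vs. set vs \<subseteq> V \<longrightarrow> poly_indep s L0 vs \<longrightarrow> length vs \<le> n"
    using fr unfolding finite_rank_def by blast
  let ?vs = "map (\<lambda>k. (Cas ^^ k) e) [0..<Suc n]"
  have "set ?vs \<subseteq> V" using e lCas by auto
  then have "\<not> poly_indep s L0 ?vs" using n by fastforce
  then obtain ps where ps: "length ps = Suc n"
    "(\<Sum>i<Suc n. pa L0 (ps ! i) (?vs ! i)) = 0" "\<exists>i<length ps. ps ! i \<noteq> 0"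
    unfolding poly_indep_def by auto
  have d: "degree (Poly ps) < Suc (Suc n)" using degree_Poly[of ps] ps(1) by simp
  have "bpa (Poly ps) e = (\<Sum>k<Suc (Suc n). pa L0 (nth_default 0 ps k) ((Cas ^^ k) e))"
    using bpa_bound[OF d] by simp
  also have "\<dots> = (\<Sum>k<Suc n. pa L0 (ps ! k) (?vs ! k))"
    using ps(1) by (simp add: nth_default_def del: upt_Suc)
  finally have "bpa (Poly ps) e = 0" using ps(2) by simp
  moreover have "Poly ps \<noteq> 0"
  proof
    assume "Poly ps = 0"
    then have "\<And>i. nth_default 0 ps i = 0" by (metis coeff_0 coeff_Poly_eq)
    then show False using ps(3) by (metis nth_default_nth)
  qed
  ultimately show ?thesis by blast
qed

lemma Ann_nonzero: "\<exists>Q. Q \<noteq> 0 \<and> Q \<in> Ann"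
proof -
  obtain n where n: "\<forall>vs. set vs \<subseteq> V \<longrightarrow> poly_indep s L0 vs \<longrightarrow> length vs \<le> n"
    using fr unfolding finite_rank_def by blast
  obtain Qf where Qf: "\<And>e. e \<in> V \<Longrightarrow> Qf e \<noteq> 0 \<and> bpa (Qf e) e = 0"
    using rel_exists by metis
  let ?P = "\<lambda>vs. set vs \<subseteq> V \<and> poly_indep s L0 vs"
  have P0: "?P []" by (simp add: poly_indep_def)
  obtain es where es: "?P es" and esmax: "\<And>vs. ?P vs \<Longrightarrow> length vs \<le> length es"
    using Lattices_Big.ex_has_greatest_nat[of ?P "[]" length "Suc n"] P0 n by fastforce
  define Q where "Q = prod Qf (set es)"
  have Qnz: "Q \<noteq> 0" unfolding Q_def using Qf es by (auto simp: prod_zero_iff)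
  have Qe: "bpa Q e = 0" if e: "e \<in> set es" for e
  proof -
    have eV: "e \<in> V" using e es by auto
    have "Q = prod Qf (set es - {e}) * Qf e"
      unfolding Q_def using e by (simp add: prod.remove mult.commute)
    then have "bpa Q e = bpa (prod Qf (set es - {e})) (bpa (Qf e) e)"
      using eV by (simp add: bpa_mult)
    then show ?thesis using Qf[OF eV] lop_0[OF lop_bpa] by simp
  qed
  have "bpa Q v = 0" if v: "v \<in> V" for v
  proof -
    let ?m = "length es"
    have "\<not> ?P (es @ [v])" using esmax[of "es @ [v]"] by auto
    then have "\<not> poly_indep s L0 (es @ [v])" using es v by auto
    then obtain ps where ps: "length ps = Suc ?m"
      "(\<Sum>i<Suc ?m. pa L0 (ps ! i) ((es @ [v]) ! i)) = 0" "\<exists>i<length ps. ps ! i \<noteq> 0"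
      unfolding poly_indep_def by auto
    have split: "(\<Sum>i<?m. pa L0 (ps ! i) (es ! i)) + pa L0 (ps ! ?m) v = 0"
      using ps(2) by (simp add: nth_append)
    have pnz: "ps ! ?m \<noteq> 0"
    proof
      assume z: "ps ! ?m = 0"
      have "(\<Sum>i<length es. pa L0 (take ?m ps ! i) (es ! i)) = 0"
        using split z by simp
      then have "\<forall>i<length (take ?m ps). take ?m ps ! i = 0"
        using es unfolding poly_indep_def using ps(1) by auto
      then have "\<forall>i<?m. ps ! i = 0" using ps(1) by auto
      then show False using ps(3) z ps(1) by (metis less_Suc_eq)
    qed
    have pv: "pa L0 (ps ! ?m) v = - (\<Sum>i<?m. pa L0 (ps ! i) (es ! i))"
      using split by (simp add: eq_neg_iff_add_eq_0 add.commute)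
    have esV: "\<And>i. i < ?m \<Longrightarrow> es ! i \<in> V" using es by auto
    have "pa L0 (ps ! ?m) (bpa Q v) = bpa Q (pa L0 (ps ! ?m) v)"
      using v by (simp add: bpa_pa_comm)
    also have "\<dots> = - (\<Sum>i<?m. pa L0 (ps ! i) (bpa Q (es ! i)))"
    proof -
      have tV: "\<And>i. i \<in> {..<?m} \<Longrightarrow> pa L0 (ps ! i) (es ! i) \<in> V" using esV lL0 by (simp add: pa_in)
      have sV: "(\<Sum>i<?m. pa L0 (ps ! i) (es ! i)) \<in> V" using tV by (intro Vsum) auto
      have "bpa Q (\<Sum>i<?m. pa L0 (ps ! i) (es ! i)) = (\<Sum>i<?m. bpa Q (pa L0 (ps ! i) (es ! i)))"
        by (rule lop_sum[OF lop_bpa tV])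
      also have "\<dots> = (\<Sum>i<?m. pa L0 (ps ! i) (bpa Q (es ! i)))"
        using esV by (simp add: bpa_pa_comm)
      finally show ?thesis unfolding pv using lop_neg[OF lop_bpa sV] by simp
    qed
    also have "\<dots> = 0" using Qe lop_0[OF lop_pa[OF lL0]] by simp
    finally show ?thesis using tfD[OF pnz] v by simp
  qed
  then show ?thesis using Qnz unfolding Ann_def by blast
qed

end

lemma L1: "poly (map_poly (\<lambda>q. pcompose q r) Q) [:c:] = pcompose (poly Q [:c:]) r"
  by (induct Q) (simp_all add: map_poly_pCons pcompose_0 pcompose_add pcompose_mult pcompose_smult)

lemma L2: "poly (poly Q [:c:]) z = poly (map_poly (\<lambda>q. poly q z) Q) c"
  by (induct Q) (simp_all add: map_poly_pCons)

lemma L3: "coeff (poly Q [:c:]) j = poly (map_poly (\<lambda>q. coeff q j) Q) c"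
  by (induct Q) (simp_all add: map_poly_pCons)

lemma chain:
  fixes h :: "complex poly"
  assumes h: "h \<noteq> 0" and c: "c \<notin> \<real>"
    and up: "\<And>z. poly h z = 0 \<Longrightarrow> poly h (z + 1) = 0 \<or> z * z + z = c"
    and down: "\<And>z. poly h z = 0 \<Longrightarrow> poly h (z - 1) = 0 \<or> z * z - z = c"
  shows "poly h z0 \<noteq> 0"
proof
  assume z0: "poly h z0 = 0"
  define R where "R = {z. poly h z = 0 \<and> (\<exists>k::int. z = z0 + of_int k)}"
  have fin: "finite R" unfolding R_def using poly_roots_finite[OF h] by (rule rev_finite_subset) auto
  have ne: "z0 \<in> R" unfolding R_def using z0 by (auto intro: exI[of _ 0])
  obtain u where uR: "u \<in> R" and umax: "\<And>z. z \<in> R \<Longrightarrow> Re z \<le> Re u"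
  proof -
    have "Max (Re ` R) \<in> Re ` R" using fin ne by (intro Max_in) auto
    then obtain u where "u \<in> R" "Re u = Max (Re ` R)" by auto
    moreover have "\<And>z. z \<in> R \<Longrightarrow> Re z \<le> Max (Re ` R)" using fin by auto
    ultimately show ?thesis using that by metis
  qed
  obtain w where wR: "w \<in> R" and wmin: "\<And>z. z \<in> R \<Longrightarrow> Re w \<le> Re z"
  proof -
    have "Min (Re ` R) \<in> Re ` R" using fin ne by (intro Min_in) auto
    then obtain w where "w \<in> R" "Re w = Min (Re ` R)" by auto
    moreover have "\<And>z. z \<in> R \<Longrightarrow> Min (Re ` R) \<le> Re z" using fin by auto
    ultimately show ?thesis using that by metis
  qed
  obtain ku where ku: "u = z0 + of_int ku" "poly h u = 0" using uR unfolding R_def by auto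
  obtain kw where kw: "w = z0 + of_int kw" "poly h w = 0" using wR unfolding R_def by auto
  have "poly h (u + 1) \<noteq> 0"
  proof
    assume "poly h (u + 1) = 0"
    then have "u + 1 \<in> R" unfolding R_def using ku by (auto intro!: exI[of _ "ku + 1"])
    then show False using umax[of "u + 1"] by simp
  qed
  then have eu: "u * u + u = c" using up[OF ku(2)] by auto
  have "poly h (w - 1) \<noteq> 0"
  proof
    assume "poly h (w - 1) = 0"
    then have "w - 1 \<in> R" unfolding R_def using kw by (auto intro!: exI[of _ "kw - 1"])
    then show False using wmin[of "w - 1"] by simp
  qed
  then have ew: "w * w - w = c" using down[OF kw(2)] by auto
  have d: "u - w = of_int (ku - kw)" using ku kw by simp
  have "Re w \<le> Re u" using wmin[OF uR] .
  then have dge: "ku - kw \<ge> 0" using ku kw by simp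
  have "(u + w) * (u - w + 1) = 0" using eu ew by (simp add: algebra_simps)
  moreover have "u - w + 1 \<noteq> 0"
  proof
    assume "u - w + 1 = 0"
    then have "of_int (ku - kw + 1) = (0::complex)" using d by simp
    then show False using dge by (simp only: of_int_eq_0_iff)
  qed
  ultimately have "w = - u" by (simp add: add_eq_0_iff2)
  then have "2 * u = of_int (ku - kw)" using d by simp
  then have "u = of_int (ku - kw) / 2" by (simp add: field_simps)
  moreover have "of_int (ku - kw) / (2::complex) \<in> \<real>" by (intro Reals_divide Reals_of_int) auto
  ultimately have "u \<in> \<real>" by (simp only:)
  then have "c \<in> \<real>" using eu by (metis Reals_add Reals_mult)
  then show False using c by simp
qed

context tffr
begin

lemma min_ann: obtains Q0 where "Q0 \<in> Ann" "Q0 \<noteq> 0"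
  "\<And>R. R \<in> Ann \<Longrightarrow> R \<noteq> 0 \<Longrightarrow> degree Q0 \<le> degree R"
  "\<And>R. R \<in> Ann \<Longrightarrow> R \<noteq> 0 \<Longrightarrow> degree R = degree Q0 \<Longrightarrow> degree (lead_coeff Q0) \<le> degree (lead_coeff R)"
proof -
  obtain Q where Q: "Q \<noteq> 0 \<and> Q \<in> Ann" using Ann_nonzero by blast
  obtain Q1 where Q1: "Q1 \<noteq> 0 \<and> Q1 \<in> Ann" and Q1m: "\<And>R. R \<noteq> 0 \<and> R \<in> Ann \<Longrightarrow> degree Q1 \<le> degree R"
    using ex_has_least_nat[of "\<lambda>Q. Q \<noteq> 0 \<and> Q \<in> Ann" Q degree] Q by blast
  obtain Q0 where Q0: "(Q0 \<noteq> 0 \<and> Q0 \<in> Ann) \<and> degree Q0 = degree Q1"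
    and Q0m: "\<And>R. (R \<noteq> 0 \<and> R \<in> Ann) \<and> degree R = degree Q1 \<Longrightarrow> degree (lead_coeff Q0) \<le> degree (lead_coeff R)"
    using ex_has_least_nat[of "\<lambda>Q. (Q \<noteq> 0 \<and> Q \<in> Ann) \<and> degree Q = degree Q1" Q1 "\<lambda>Q. degree (lead_coeff Q)"] Q1
    by blast
  show ?thesis
    apply (rule that)
    using Q0 Q0m Q1m by auto
qed

lemma cas_poly: "\<exists>q. q \<noteq> 0 \<and> (\<forall>v\<in>V. pa Cas q v = 0)"
proof -
  obtain Q0 where Q0A: "Q0 \<in> Ann" and Q0nz: "Q0 \<noteq> 0"
    and m1: "\<And>R. R \<in> Ann \<Longrightarrow> R \<noteq> 0 \<Longrightarrow> degree Q0 \<le> degree R"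
    and m2: "\<And>R. R \<in> Ann \<Longrightarrow> R \<noteq> 0 \<Longrightarrow> degree R = degree Q0 \<Longrightarrow> degree (lead_coeff Q0) \<le> degree (lead_coeff R)"
    by (rule min_ann) blast
  have pdiv: "\<exists>a A. a \<noteq> 0 \<and> smult a R = Q0 * A" if R: "R \<in> Ann" for R
  proof -
    obtain a q where aq: "a \<noteq> 0" "smult a R = Q0 * q + pseudo_mod R Q0"
      using pseudo_mod(1)[OF Q0nz, of R] by blast
    have "pseudo_mod R Q0 = smult a R - Q0 * q" using aq by simp
    then have rA: "pseudo_mod R Q0 \<in> Ann" using Ann_diff Ann_smult[OF R] Ann_mult2[OF Q0A] by simp
    have "pseudo_mod R Q0 = 0"
    proof (rule ccontr)
      assume nz: "pseudo_mod R Q0 \<noteq> 0"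
      then have "degree (pseudo_mod R Q0) < degree Q0" using pseudo_mod(2)[OF Q0nz, of R] by simp
      then show False using m1[OF rA nz] by simp
    qed
    then show ?thesis using aq by auto
  qed
  have prim: "map_poly (\<lambda>q. poly q r0) Q0 \<noteq> 0" for r0
  proof
    assume z: "map_poly (\<lambda>q. poly q r0) Q0 = 0"
    let ?p = "[:-r0, 1:] :: complex poly"
    have dv: "?p dvd coeff Q0 k" for k
    proof -
      have "coeff (map_poly (\<lambda>q. poly q r0) Q0) k = 0" using z by simp
      then have "poly (coeff Q0 k) r0 = 0" by (simp add: coeff_map_poly)
      then show ?thesis by (simp add: poly_eq_0_iff_dvd)
    qed
    define Q' where "Q' = map_poly (\<lambda>q. q div ?p) Q0"
    have cQ': "coeff Q' k = coeff Q0 k div ?p" for k unfolding Q'_def by (simp add: coeff_map_poly)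
    have eq: "Q0 = smult ?p Q'"
      by (rule poly_eqI) (simp only: coeff_smult cQ' dvd_mult_div_cancel[OF dv])
    have pnz: "?p \<noteq> 0" by simp
    have Q'A: "Q' \<in> Ann" using Ann_sat[of ?p Q'] eq Q0A by simp
    have Q'nz: "Q' \<noteq> 0" using eq Q0nz by auto
    have dQ: "degree Q' = degree Q0" using eq pnz by simp
    have lc: "lead_coeff Q0 = ?p * lead_coeff Q'" using dQ by (subst eq) (simp only: coeff_smult)
    have "lead_coeff Q' \<noteq> 0" using Q'nz by simp
    then have "degree (lead_coeff Q0) = Suc (degree (lead_coeff Q'))"
      unfolding lc by (subst degree_mult_eq) auto
    then show False using m2[OF Q'A Q'nz dQ] by simp
  qed
  obtain a A where aA: "a \<noteq> 0" "smult a (map_poly (\<lambda>q. pcompose q [:1, 1:]) Q0 * [:[:0,1,1:], -1:]) = Q0 * A"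
    using pdiv[OF Ann_shift[OF Q0A]] by blast
  obtain a' A' where aA': "a' \<noteq> 0" "smult a' (map_poly (\<lambda>q. pcompose q [:-1, 1:]) Q0 * [:[:0,-1,1:], -1:]) = Q0 * A'"
    using pdiv[OF Ann_shift'[OF Q0A]] by blast
  define h where "h c = poly Q0 [:c:]" for c
  have up: "poly a z = 0 \<or> poly (h c) (z + 1) = 0 \<or> z * z + z = c" if hz: "poly (h c) z = 0" for c z
  proof -
    have e1: "poly (smult a (map_poly (\<lambda>q. pcompose q [:1, 1:]) Q0 * [:[:0,1,1:], -1:])) [:c:]
       = a * (pcompose (h c) [:1,1:] * ([:0,1,1:] - [:c:]))"
      by (simp add: L1 h_def)
    have e2: "poly (Q0 * A) [:c:] = h c * poly A [:c:]" by (simp add: h_def)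
    have "poly (a * (pcompose (h c) [:1,1:] * ([:0,1,1:] - [:c:]))) z = 0"
      using aA(2) e1 e2 hz by (metis mult_eq_0_iff poly_mult)
    then have "poly a z * (poly (h c) (z + 1) * (z * z + z - c)) = 0"
      by (simp add: poly_pcompose algebra_simps)
    then show ?thesis by auto
  qed
  have down: "poly a' z = 0 \<or> poly (h c) (z - 1) = 0 \<or> z * z - z = c" if hz: "poly (h c) z = 0" for c z
  proof -
    have e1: "poly (smult a' (map_poly (\<lambda>q. pcompose q [:-1, 1:]) Q0 * [:[:0,-1,1:], -1:])) [:c:]
       = a' * (pcompose (h c) [:-1,1:] * ([:0,-1,1:] - [:c:]))"
      by (simp add: L1 h_def)
    have e2: "poly (Q0 * A') [:c:] = h c * poly A' [:c:]" by (simp add: h_def)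
    have "poly (a' * (pcompose (h c) [:-1,1:] * ([:0,-1,1:] - [:c:]))) z = 0"
      using aA'(2) e1 e2 hz by (metis mult_eq_0_iff poly_mult)
    then have "poly a' z * (poly (h c) (z - 1) * (z * z - z - c)) = 0"
      by (simp add: poly_pcompose algebra_simps)
    then show ?thesis by auto
  qed
  define G where "G = {c. c \<notin> \<real> \<and> (\<forall>r. poly (a * a') r = 0 \<longrightarrow> poly (h c) r \<noteq> 0) \<and> h c \<noteq> 0}"
  have deg0: "degree (h c) = 0" if cG: "c \<in> G" for c
  proof -
    have nr: "poly (h c) z \<noteq> 0" for z
    proof (rule chain)
      show "h c \<noteq> 0" "c \<notin> \<real>" using cG unfolding G_def by auto
    next
      fix z assume hz: "poly (h c) z = 0"
      then have "poly a z \<noteq> 0" using cG unfolding G_def by auto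
      then show "poly (h c) (z + 1) = 0 \<or> z * z + z = c" using up[OF hz] by auto
    next
      fix z assume hz: "poly (h c) z = 0"
      then have "poly a' z \<noteq> 0" using cG unfolding G_def by auto
      then show "poly (h c) (z - 1) = 0 \<or> z * z - z = c" using down[OF hz] by auto
    qed
    show ?thesis
    proof (rule ccontr)
      assume "degree (h c) \<noteq> 0"
      then have "\<not> constant (poly (h c))" by (simp add: constant_degree)
      then obtain z where "poly (h c) z = 0" using fundamental_theorem_of_algebra by blast
      then show False using nr by blast
    qed
  qed
  define B1 where "B1 = {c. poly (map_poly (\<lambda>q. poly q 0) Q0) c = 0}"
  have fB1: "finite B1" unfolding B1_def by (rule poly_roots_finite[OF prim])
  define RT where "RT = {r. poly (a * a') r = 0}"
  have fRT: "finite RT" unfolding RT_def using aA(1) aA'(1) by (intro poly_roots_finite) simp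
  define B2 where "B2 = (\<Union>r\<in>RT. {c. poly (map_poly (\<lambda>q. poly q r) Q0) c = 0})"
  have fB2: "finite B2" unfolding B2_def using fRT by (intro finite_UN_I poly_roots_finite[OF prim])
  define NR where "NR = range (\<lambda>n::nat. \<i> * of_nat (Suc n))"
  have iNR: "infinite NR" unfolding NR_def
    by (rule range_inj_infinite) (auto simp: inj_def)
  have NRr: "c \<notin> \<real>" if "c \<in> NR" for c
  proof
    assume "c \<in> \<real>"
    then have "Im c = 0" by (simp add: complex_is_Real_iff)
    then show False using that unfolding NR_def by auto
  qed
  have sub: "NR - (B1 \<union> B2) \<subseteq> G"
  proof
    fix c assume c: "c \<in> NR - (B1 \<union> B2)"
    have "h c \<noteq> 0"
    proof
      assume "h c = 0"
      then have "poly (h c) 0 = 0" by simp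
      then have "c \<in> B1" unfolding B1_def h_def by (simp add: L2)
      then show False using c by simp
    qed
    moreover have "poly (h c) r \<noteq> 0" if "poly (a * a') r = 0" for r
    proof
      assume "poly (h c) r = 0"
      then have "c \<in> B2" unfolding B2_def RT_def h_def using that by (auto simp: L2)
      then show False using c by simp
    qed
    ultimately show "c \<in> G" unfolding G_def using NRr c by auto
  qed
  have iG: "infinite G"
  proof
    assume "finite G"
    then have "finite (NR - (B1 \<union> B2))" using sub by (rule rev_finite_subset)
    then show False using iNR fB1 fB2 by simp
  qed
  have cz: "map_poly (\<lambda>q. coeff q j) Q0 = 0" if j: "j > 0" for j
  proof (rule ccontr)
    assume nz: "map_poly (\<lambda>q. coeff q j) Q0 \<noteq> 0"
    have "G \<subseteq> {c. poly (map_poly (\<lambda>q. coeff q j) Q0) c = 0}"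
    proof
      fix c assume "c \<in> G"
      then have "coeff (h c) j = 0" using deg0 j by (simp add: coeff_eq_0)
      then show "c \<in> {c. poly (map_poly (\<lambda>q. coeff q j) Q0) c = 0}" unfolding h_def by (simp add: L3)
    qed
    then have "finite G" using poly_roots_finite[OF nz] finite_subset by blast
    then show False using iG by simp
  qed
  have cc: "coeff (coeff Q0 k) j = 0" if "j > 0" for j k
  proof -
    have "coeff (map_poly (\<lambda>q. coeff q j) Q0) k = 0" using cz[OF that] by simp
    then show ?thesis by (simp add: coeff_map_poly)
  qed
  define q where "q = map_poly (\<lambda>p. coeff p 0) Q0"
  have Qq: "Q0 = map_poly (\<lambda>x. [:x:]) q"
  proof (rule poly_eqI)
    fix k
    show "coeff Q0 k = coeff (map_poly (\<lambda>x. [:x:]) q) k"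
    proof (rule poly_eqI)
      fix j
      show "coeff (coeff Q0 k) j = coeff (coeff (map_poly (\<lambda>x. [:x:]) q) k) j"
        using cc[of j k] by (cases j) (simp_all add: q_def coeff_map_poly)
    qed
  qed
  have qnz: "q \<noteq> 0" using Qq Q0nz by auto
  have "pa Cas q v = 0" if v: "v \<in> V" for v
  proof -
    have "pa Cas q v = bpa Q0 v" using bpa_constcoeff[OF v, of q] Qq by simp
    also have "\<dots> = 0" using Q0A v unfolding Ann_def by simp
    finally show ?thesis .
  qed
  then show ?thesis using qnz by blast
qed

end

lemma coprime_lin: "\<alpha> \<noteq> \<nu> \<Longrightarrow> coprime ([:-\<alpha>, 1:] :: complex poly) [:-\<nu>, 1:]"
proof (rule coprimeI)
  fix d assume ne: "\<alpha> \<noteq> \<nu>" and d1: "d dvd [:-\<alpha>, 1:]" and d2: "d dvd [:-\<nu>, 1:]"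
  have "d dvd [:-\<nu>, 1:] - [:-\<alpha>, 1:]" by (rule dvd_diff[OF d2 d1])
  then have "d dvd [:\<alpha> - \<nu>:]" by simp
  moreover have "is_unit [:\<alpha> - \<nu>:]" using ne by (simp add: is_unit_const_poly_iff dvd_field_iff)
  ultimately show "is_unit d" by (rule dvd_unit_imp_unit)
qed

lemma coprime_fac: "\<alpha> \<notin> M \<Longrightarrow> coprime ([:-\<alpha>, 1:] ^ N :: complex poly) (\<Prod>\<mu>\<in>M. [:-\<mu>, 1:] ^ N)"
  by (intro prod_coprime_right) (metis coprime_lin coprime_power_left_iff coprime_power_right_iff)

context vsV
begin

lemma decomp:
  assumes T: "lop T" and M: "finite M"
  shows "v \<in> V \<Longrightarrow> pa T (\<Prod>\<mu>\<in>M. [:-\<mu>, 1:] ^ N) v = 0 \<Longrightarrow>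
    \<exists>w. (\<forall>\<mu>\<in>M. w \<mu> \<in> V \<and> pa T ([:-\<mu>, 1:] ^ N) (w \<mu>) = 0) \<and> v = (\<Sum>\<mu>\<in>M. w \<mu>)"
  using M
proof (induct M arbitrary: v rule: finite_induct)
  case empty then show ?case by simp
next
  case (insert \<alpha> M)
  let ?A = "[:-\<alpha>, 1:] ^ N :: complex poly"
  let ?B = "\<Prod>\<mu>\<in>M. [:-\<mu>, 1:] ^ N :: complex poly"
  have AB: "(\<Prod>\<mu>\<in>insert \<alpha> M. [:-\<mu>, 1:] ^ N) = ?A * ?B" using insert by simp
  have "coprime ?A ?B" using insert coprime_fac by blast
  then have "gcd ?A ?B = 1" by (simp add: coprime_iff_gcd_eq_1)
  define x where "x = fst (bezout_coefficients ?A ?B)"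
  define y where "y = snd (bezout_coefficients ?A ?B)"
  have xy: "x * ?A + y * ?B = 1" unfolding x_def y_def
    using bezout_coefficients_fst_snd[of ?A ?B] \<open>gcd ?A ?B = 1\<close> by (simp only:)
  define v1 where "v1 = pa T (y * ?B) v"
  define v2 where "v2 = pa T (x * ?A) v"
  have v: "v \<in> V" and z: "pa T (?A * ?B) v = 0" using insert AB by auto
  have vs: "v = v2 + v1" unfolding v1_def v2_def using pa_add[of T "x * ?A" "y * ?B" v] xy pa_1 by (simp only:)
  have v1V: "v1 \<in> V" "v2 \<in> V" unfolding v1_def v2_def using T v by auto
  have "pa T ?A v1 = pa T (?A * (y * ?B)) v" unfolding v1_def by (rule pa_mult[OF T v, symmetric])
  also have "?A * (y * ?B) = y * (?A * ?B)" by (rule mult.left_commute)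
  also have "pa T (y * (?A * ?B)) v = 0" using z pa_mult[OF T v, of y "?A * ?B"] lop_0[OF lop_pa[OF T]] by simp
  finally have A1: "pa T ?A v1 = 0" .
  have "pa T ?B v2 = pa T (?B * (x * ?A)) v" unfolding v2_def by (rule pa_mult[OF T v, symmetric])
  also have "?B * (x * ?A) = x * (?A * ?B)" by (simp only: ac_simps)
  also have "pa T (x * (?A * ?B)) v = 0" using z pa_mult[OF T v, of x "?A * ?B"] lop_0[OF lop_pa[OF T]] by simp
  finally have "pa T ?B v2 = 0" .
  then obtain w where w: "\<forall>\<mu>\<in>M. w \<mu> \<in> V \<and> pa T ([:-\<mu>, 1:] ^ N) (w \<mu>) = 0" "v2 = (\<Sum>\<mu>\<in>M. w \<mu>)"
    using insert.hyps(3) v1V by blast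
  let ?w = "w(\<alpha> := v1)"
  have "(\<Sum>\<mu>\<in>insert \<alpha> M. ?w \<mu>) = v1 + (\<Sum>\<mu>\<in>M. w \<mu>)"
  proof -
    have "(\<Sum>\<mu>\<in>M. ?w \<mu>) = (\<Sum>\<mu>\<in>M. w \<mu>)" using insert(2) by (intro sum.cong) auto
    then show ?thesis using insert(1,2) by simp
  qed
  then show ?case using w A1 v1V vs by (intro exI[of _ ?w]) (auto simp: add.commute)
qed

lemma pa_lin_pow: "lop T \<Longrightarrow> v \<in> V \<Longrightarrow> pa T ([:-\<mu>, 1:] ^ N) v = ((\<lambda>x. T x - s \<mu> x) ^^ N) v"
proof -
  assume T: "lop T" and v: "v \<in> V"
  have "pa T ([:-\<mu>, 1:] ^ N) v = (pa T [:-\<mu>, 1:] ^^ N) v" by (rule pa_power[OF T v])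
  also have "\<dots> = ((\<lambda>x. T x - s \<mu> x) ^^ N) v"
    by (rule pow_cong[OF lop_minus[OF T lop_smul] _ v]) (use T in \<open>simp add: pa_X\<close>)
  finally show ?thesis .
qed

lemma inj_factor:
  assumes T: "lop T" and u: "u \<in> V" and h1: "pa T ([:-\<nu>, 1:] ^ N) u = 0"
    and h2: "pa T ([:-\<mu>, 1:] ^ N) u = 0" and ne: "\<mu> \<noteq> \<nu>"
  shows "u = 0"
proof (rule nil_inj[where N="\<lambda>x. T x - s \<nu> x" and m=N and n=N and c="\<nu> - \<mu>"])
  show "lop (\<lambda>x. T x - s \<nu> x)" by (rule lop_minus[OF T lop_smul])
  show "u \<in> V" by fact
  show "((\<lambda>x. T x - s \<nu> x) ^^ N) u = 0" using h1 pa_lin_pow[OF T u] by simp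
  have "((\<lambda>v. T v - s \<nu> v + s (\<nu> - \<mu>) v) ^^ N) u = ((\<lambda>x. T x - s \<mu> x) ^^ N) u"
    by (rule pow_cong[OF lop_minus[OF T lop_smul] _ u]) (simp add: scale_left_diff_distrib)
  then show "((\<lambda>v. T v - s \<nu> v + s (\<nu> - \<mu>) v) ^^ N) u = 0" using h2 pa_lin_pow[OF T u] by simp
  show "\<nu> - \<mu> \<noteq> 0" using ne by simp
qed

lemma indep:
  assumes T: "lop T" and M: "finite M"
    and w: "\<And>\<mu>. \<mu> \<in> M \<Longrightarrow> w \<mu> \<in> V \<and> pa T ([:-\<mu>, 1:] ^ N) (w \<mu>) = 0"
    and sum0: "(\<Sum>\<mu>\<in>M. w \<mu>) = 0" and \<nu>: "\<nu> \<in> M"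
  shows "w \<nu> = 0"
proof -
  have gen: "u = 0" if "finite K" "\<nu> \<notin> K" "u \<in> V" "pa T ([:-\<nu>, 1:] ^ N) u = 0"
      "pa T (\<Prod>\<mu>\<in>K. [:-\<mu>, 1:] ^ N) u = 0" for K u
    using that
  proof (induct K arbitrary: u rule: finite_induct)
    case empty then show ?case by simp
  next
    case (insert \<mu> K)
    let ?P = "\<Prod>\<mu>\<in>K. [:-\<mu>, 1:] ^ N :: complex poly"
    define u' where "u' = pa T ?P u"
    have u'V: "u' \<in> V" unfolding u'_def using T insert by simp
    have "pa T ([:-\<mu>, 1:] ^ N) u' = pa T ([:-\<mu>, 1:] ^ N * ?P) u"
      unfolding u'_def using T insert by (simp add: pa_mult)
    also have "\<dots> = 0" using insert by simp
    finally have a: "pa T ([:-\<mu>, 1:] ^ N) u' = 0" .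
    have "pa T ([:-\<nu>, 1:] ^ N) u' = pa T (?P * [:-\<nu>, 1:] ^ N) u"
      unfolding u'_def using T insert by (simp add: pa_mult mult.commute)
    also have "\<dots> = 0" using insert T pa_mult[OF T, of u ?P] lop_0[OF lop_pa[OF T]] by simp
    finally have b: "pa T ([:-\<nu>, 1:] ^ N) u' = 0" .
    have "u' = 0" using inj_factor[OF T u'V b a] insert by auto
    then show ?case using insert unfolding u'_def by simp
  qed
  let ?K = "M - {\<nu>}"
  let ?P = "\<Prod>\<mu>\<in>?K. [:-\<mu>, 1:] ^ N :: complex poly"
  have kill: "pa T ?P (w \<mu>) = 0" if "\<mu> \<in> ?K" for \<mu>
  proof -
    have "?P = (\<Prod>\<mu>'\<in>?K - {\<mu>}. [:-\<mu>', 1:] ^ N) * [:-\<mu>, 1:] ^ N"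
      using that M by (simp add: prod.remove mult.commute)
    then show ?thesis using w[of \<mu>] that T lop_0[OF lop_pa[OF T]] by (simp add: pa_mult)
  qed
  have wV: "\<And>\<mu>. \<mu> \<in> M \<Longrightarrow> w \<mu> \<in> V" using w by blast
  have "0 = pa T ?P (\<Sum>\<mu>\<in>M. w \<mu>)" using sum0 lop_0[OF lop_pa[OF T]] by simp
  also have "\<dots> = (\<Sum>\<mu>\<in>M. pa T ?P (w \<mu>))" by (rule lop_sum[OF lop_pa[OF T] wV])
  also have "\<dots> = pa T ?P (w \<nu>) + (\<Sum>\<mu>\<in>?K. pa T ?P (w \<mu>))" using M \<nu> by (simp add: sum.remove)
  also have "(\<Sum>\<mu>\<in>?K. pa T ?P (w \<mu>)) = 0" using kill by simp
  finally have "pa T ?P (w \<nu>) = 0" by simp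
  then show ?thesis using gen[of ?K "w \<nu>"] M w[OF \<nu>] by simp
qed

end

lemma submodule_tffr:
  assumes T: "tffr_module s V Lm L0 Lp" and W: "sl2_submodule s W V Lm L0 Lp"
  shows "tffr_module s W Lm L0 Lp"
proof -
  have WV: "W \<subseteq> V" using W unfolding sl2_submodule_def by auto
  have lin: "lin_on s V f s \<Longrightarrow> lin_on s W f s" for f
    using WV unfolding lin_on_def by blast
  have S: "sl2_module s V Lm L0 Lp" using T unfolding tffr_module_def by blast
  have W': "module.subspace s W" "Lm ` W \<subseteq> W" "L0 ` W \<subseteq> W" "Lp ` W \<subseteq> W"
    using W unfolding sl2_submodule_def by auto
  have "sl2_module s W Lm L0 Lp"
    unfolding sl2_module_def
  proof (intro conjI)
    show "vector_space s" using S unfolding sl2_module_def by blast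
    show "lin_on s W Lm s" "lin_on s W L0 s" "lin_on s W Lp s"
      using S lin unfolding sl2_module_def by blast+
    show "\<forall>v\<in>W. L0 (Lm v) - Lm (L0 v) = Lm v" "\<forall>v\<in>W. L0 (Lp v) - Lp (L0 v) = - Lp v"
      "\<forall>v\<in>W. Lp (Lm v) - Lm (Lp v) = s 2 (L0 v)"
      using S WV unfolding sl2_module_def by blast+
  qed (use W' in auto)
  moreover have "torsion_free s W L0"
    using T WV unfolding tffr_module_def torsion_free_def by blast
  moreover have "finite_rank s W L0"
    using T WV unfolding tffr_module_def finite_rank_def by (meson order_trans)
  ultimately show ?thesis unfolding tffr_module_def by blast
qed

context tffr
begin

lemma decomposition:
  "\<exists>M :: complex set. \<exists>W :: complex \<Rightarrow> 'v set.
          finite M \<and>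
          (\<forall>\<mu>\<in>M. sl2_submodule s (W \<mu>) V Lm L0 Lp \<and> gen_casimir_tffr \<mu> s (W \<mu>) Lm L0 Lp) \<and>
          (\<forall>v\<in>V. \<exists>!w :: complex \<Rightarrow> 'v.
              (\<forall>\<mu>\<in>M. w \<mu> \<in> W \<mu>) \<and> (\<forall>\<mu>. \<mu> \<notin> M \<longrightarrow> w \<mu> = 0) \<and>
              v = (\<Sum>\<mu>\<in>M. w \<mu>))"
proof -
  obtain q where qnz: "q \<noteq> 0" and q: "\<And>v. v \<in> V \<Longrightarrow> pa Cas q v = 0" using cas_poly by blast
  define M where "M = {\<mu>. poly q \<mu> = 0}"
  have fM: "finite M" unfolding M_def by (rule poly_roots_finite[OF qnz])
  define N where "N = Suc (degree q)"
  define W where "W \<mu> = {v \<in> V. pa Cas ([:-\<mu>, 1:] ^ N) v = 0}" for \<mu>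
  define F where "F = (\<Prod>\<mu>\<in>M. [:-\<mu>, 1:] ^ N)"
  have "q dvd F"
  proof -
    let ?r = "\<Prod>\<mu>\<in>M. [:-\<mu>, 1:] :: complex poly"
    have "\<forall>x. poly q x = 0 \<longrightarrow> poly ?r x = 0"
      using fM unfolding M_def by (auto simp: poly_prod prod_zero_iff)
    then have "q dvd ?r ^ degree q" using nullstellensatz_univariate[of q ?r] qnz by auto
    also have "?r ^ degree q dvd ?r ^ N" unfolding N_def by (rule le_imp_power_dvd) simp
    also have "?r ^ N = F" unfolding F_def by (rule prod_power_distrib)
    finally show ?thesis .
  qed
  then obtain t where Ft: "F = q * t" by blast
  have F0: "pa Cas F v = 0" if v: "v \<in> V" for v
  proof -
    have "pa Cas F v = pa Cas (t * q) v" using Ft by (simp add: mult.commute)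
    also have "\<dots> = pa Cas t (pa Cas q v)" by (rule pa_mult[OF lCas v])
    also have "\<dots> = 0" using q[OF v] lop_0[OF lop_pa[OF lCas]] by simp
    finally show ?thesis .
  qed
  have Wsub: "sl2_submodule s (W \<mu>) V Lm L0 Lp" for \<mu>
  proof -
    let ?P = "pa Cas ([:-\<mu>, 1:] ^ N)"
    have P: "lop ?P" by (rule lop_pa[OF lCas])
    have sub: "subspace (W \<mu>)" unfolding W_def subspace_def using P by simp
    have cm: "?P (L v) = L (?P v)" if L: "lop L" and c: "\<And>v. v \<in> V \<Longrightarrow> L (Cas v) = Cas (L v)" and v: "v \<in> V" for L v
      using pa_comm[OF lCas L c v] by simp
    have "Lm ` W \<mu> \<subseteq> W \<mu>" "L0 ` W \<mu> \<subseteq> W \<mu>" "Lp ` W \<mu> \<subseteq> W \<mu>"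
      unfolding W_def using cm[OF lLm Cas_Lm[symmetric]] cm[OF lL0 Cas_L0[symmetric]] cm[OF lLp Cas_Lp[symmetric]]
        lLm lL0 lLp by auto
    then show ?thesis using sub unfolding sl2_submodule_def W_def by auto
  qed
  have tffrV: "tffr_module s V Lm L0 Lp"
    unfolding tffr_module_def using sl2 tf fr by blast
  have gc: "gen_casimir_tffr \<mu> s (W \<mu>) Lm L0 Lp" for \<mu>
    unfolding gen_casimir_tffr_def
  proof (intro conjI exI[of _ N])
    show "tffr_module s (W \<mu>) Lm L0 Lp" by (rule submodule_tffr[OF tffrV Wsub])
    show "1 \<le> N" unfolding N_def by simp
    show "\<forall>v\<in>W \<mu>. ((\<lambda>x. casimir Lm L0 Lp x - s \<mu> x) ^^ N) v = 0"
    proof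
      fix v assume v: "v \<in> W \<mu>"
      then have "v \<in> V" "pa Cas ([:-\<mu>, 1:] ^ N) v = 0" unfolding W_def by auto
      then show "((\<lambda>x. casimir Lm L0 Lp x - s \<mu> x) ^^ N) v = 0"
        using pa_lin_pow[OF lCas, of v \<mu> N] unfolding Cas_def by simp
    qed
  qed
  have uniq: "w1 = w2" if
      w1: "(\<forall>\<mu>\<in>M. w1 \<mu> \<in> W \<mu>) \<and> (\<forall>\<mu>. \<mu> \<notin> M \<longrightarrow> w1 \<mu> = 0) \<and> v = (\<Sum>\<mu>\<in>M. w1 \<mu>)"
      and w2: "(\<forall>\<mu>\<in>M. w2 \<mu> \<in> W \<mu>) \<and> (\<forall>\<mu>. \<mu> \<notin> M \<longrightarrow> w2 \<mu> = 0) \<and> v = (\<Sum>\<mu>\<in>M. w2 \<mu>)"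
    for v w1 w2
  proof
    fix \<mu>
    show "w1 \<mu> = w2 \<mu>"
    proof (cases "\<mu> \<in> M")
      case False then show ?thesis using w1 w2 by simp
    next
      case True
      let ?d = "\<lambda>\<mu>. w1 \<mu> - w2 \<mu>"
      have d: "\<And>\<mu>. \<mu> \<in> M \<Longrightarrow> ?d \<mu> \<in> V \<and> pa Cas ([:-\<mu>, 1:] ^ N) (?d \<mu>) = 0"
        using w1 w2 lop_pa[OF lCas] unfolding W_def by auto
      have "(\<Sum>\<mu>\<in>M. ?d \<mu>) = 0" using w1 w2 by (simp add: sum_subtractf)
      then have "?d \<mu> = 0"
        using indep[OF lCas fM, where w="?d" and N=N and \<nu>=\<mu>] d True by blast
      then show ?thesis by simp
    qed
  qed
  have "\<exists>!w. (\<forall>\<mu>\<in>M. w \<mu> \<in> W \<mu>) \<and> (\<forall>\<mu>. \<mu> \<notin> M \<longrightarrow> w \<mu> = 0) \<and> v = (\<Sum>\<mu>\<in>M. w \<mu>)"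
    if v: "v \<in> V" for v
  proof -
    obtain w where w: "\<forall>\<mu>\<in>M. w \<mu> \<in> V \<and> pa Cas ([:-\<mu>, 1:] ^ N) (w \<mu>) = 0" "v = (\<Sum>\<mu>\<in>M. w \<mu>)"
      using decomp[OF lCas fM v] F0[OF v] unfolding F_def by blast
    let ?w = "\<lambda>\<mu>. if \<mu> \<in> M then w \<mu> else 0"
    have wp: "(\<forall>\<mu>\<in>M. ?w \<mu> \<in> W \<mu>) \<and> (\<forall>\<mu>. \<mu> \<notin> M \<longrightarrow> ?w \<mu> = 0) \<and> v = (\<Sum>\<mu>\<in>M. ?w \<mu>)"
      using w unfolding W_def by auto
    show ?thesis
    proof (rule ex1I[where a="?w"])
      show "(\<forall>\<mu>\<in>M. ?w \<mu> \<in> W \<mu>) \<and> (\<forall>\<mu>. \<mu> \<notin> M \<longrightarrow> ?w \<mu> = 0) \<and> v = (\<Sum>\<mu>\<in>M. ?w \<mu>)"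
        by (rule wp)
    next
      fix w' assume w': "(\<forall>\<mu>\<in>M. w' \<mu> \<in> W \<mu>) \<and> (\<forall>\<mu>. \<mu> \<notin> M \<longrightarrow> w' \<mu> = 0) \<and> v = (\<Sum>\<mu>\<in>M. w' \<mu>)"
      show "w' = ?w" by (rule uniq[OF w' wp])
    qed
  qed
  then show ?thesis
    apply (intro exI[of _ M] exI[of _ W] conjI)
    using fM Wsub gc by auto
qed

end

lemma sl2_from: "sl2_module s V Lm L0 Lp \<Longrightarrow> sl2 s V Lm L0 Lp"
  unfolding sl2_def vsV_def vsV_axioms_def sl2_axioms_def by (auto simp: sl2_module_def)

lemma tffr_from: "tffr_module s V Lm L0 Lp \<Longrightarrow> tffr s V Lm L0 Lp"
  unfolding tffr_def tffr_axioms_def tffr_module_def using sl2_from by blast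

lemma hom_zero:
  fixes sA :: "complex \<Rightarrow> 'a::ab_group_add \<Rightarrow> 'a" and sB :: "complex \<Rightarrow> 'b::ab_group_add \<Rightarrow> 'b"
  assumes ne: "\<mu> \<noteq> \<nu>" and gA: "gen_casimir_tffr \<mu> sA A Am A0 Ap"
    and gB: "gen_casimir_tffr \<nu> sB B Bm B0 Bp"
    and f: "sl2_hom sA A Am A0 Ap sB B Bm B0 Bp f" and v: "v \<in> A"
  shows "f v = 0"
proof -
  interpret a: sl2 sA A Am A0 Ap
    using gA sl2_from unfolding gen_casimir_tffr_def tffr_module_def by blast
  interpret b: sl2 sB B Bm B0 Bp
    using gB sl2_from unfolding gen_casimir_tffr_def tffr_module_def by blast
  have fB: "\<And>x. x \<in> A \<Longrightarrow> f x \<in> B" using f unfolding sl2_hom_def by auto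
  have fadd: "\<And>x y. x \<in> A \<Longrightarrow> y \<in> A \<Longrightarrow> f (x + y) = f x + f y"
    using f unfolding sl2_hom_def lin_on_def by auto
  have fsc: "\<And>c x. x \<in> A \<Longrightarrow> f (sA c x) = sB c (f x)"
    using f unfolding sl2_hom_def lin_on_def by auto
  have fm: "\<And>x. x \<in> A \<Longrightarrow> f (Am x) = Bm (f x)" and f0: "\<And>x. x \<in> A \<Longrightarrow> f (A0 x) = B0 (f x)"
    and fp: "\<And>x. x \<in> A \<Longrightarrow> f (Ap x) = Bp (f x)" using f unfolding sl2_hom_def by auto
  have fsub: "f (x - y) = f x - f y" if "x \<in> A" "y \<in> A" for x y
  proof -
    have "f (x - y) + f y = f x" using fadd[of "x - y" y] that by simp
    then show ?thesis by (simp add: eq_diff_eq)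
  qed
  have fzero: "f 0 = 0" using fsub[of 0 0] by simp
  have fC: "f (a.Cas x) = b.Cas (f x)" if x: "x \<in> A" for x
    unfolding a.Cas_def2 b.Cas_def2
    using x a.lL0 a.lLm a.lLp by (simp add: fsub fm f0 fp)
  let ?TA = "\<lambda>x. a.Cas x - sA \<mu> x"
  let ?TB = "\<lambda>x. b.Cas x - sB \<mu> x"
  have lTA: "a.lop ?TA" by (rule a.lop_minus[OF a.lCas a.lop_smul])
  have fT: "f (?TA x) = ?TB (f x)" if x: "x \<in> A" for x
    using x a.lCas by (simp add: fsub fC fsc)
  have fTn: "f ((?TA ^^ k) x) = (?TB ^^ k) (f x)" if x: "x \<in> A" for x k
    using x by (induct k arbitrary: x) (auto simp: fT a.lop_pow_in[OF lTA] lTA)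
  obtain n where n: "\<forall>v\<in>A. ((\<lambda>x. casimir Am A0 Ap x - sA \<mu> x) ^^ n) v = 0"
    using gA unfolding gen_casimir_tffr_def by blast
  obtain m where m: "\<forall>w\<in>B. ((\<lambda>x. casimir Bm B0 Bp x - sB \<nu> x) ^^ m) w = 0"
    using gB unfolding gen_casimir_tffr_def by blast
  have z1: "(?TB ^^ n) (f v) = 0" using fTn[OF v, of n] n v fzero unfolding a.Cas_def by simp
  show ?thesis
  proof (rule b.nil_inj[where N="\<lambda>x. b.Cas x - sB \<nu> x" and m=m and n=n and c="\<nu> - \<mu>"])
    show "b.lop (\<lambda>x. b.Cas x - sB \<nu> x)" by (rule b.lop_minus[OF b.lCas b.lop_smul])
    show fv: "f v \<in> B" using fB[OF v] .
    show "((\<lambda>x. b.Cas x - sB \<nu> x) ^^ m) (f v) = 0" using m fv unfolding b.Cas_def by simp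
    have "((\<lambda>w. b.Cas w - sB \<nu> w + sB (\<nu> - \<mu>) w) ^^ n) (f v) = (?TB ^^ n) (f v)"
      by (rule b.pow_cong[OF b.lop_minus[OF b.lCas b.lop_smul] _ fv]) (simp add: b.scale_left_diff_distrib)
    then show "((\<lambda>w. b.Cas w - sB \<nu> w + sB (\<nu> - \<mu>) w) ^^ n) (f v) = 0" using z1 by simp
    show "\<nu> - \<mu> \<noteq> 0" using ne by simp
  qed
qed

theorem theorem7p9:
  shows
   "(\<forall>(s :: complex \<Rightarrow> 'v::ab_group_add \<Rightarrow> 'v) V Lm L0 Lp.
       tffr_module s V Lm L0 Lp \<longrightarrow>
       (\<exists>M :: complex set. \<exists>W :: complex \<Rightarrow> 'v set.
          finite M \<and>
          (\<forall>\<mu>\<in>M. sl2_submodule s (W \<mu>) V Lm L0 Lp \<and> gen_casimir_tffr \<mu> s (W \<mu>) Lm L0 Lp) \<and>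
          (\<forall>v\<in>V. \<exists>!w :: complex \<Rightarrow> 'v.
              (\<forall>\<mu>\<in>M. w \<mu> \<in> W \<mu>) \<and> (\<forall>\<mu>. \<mu> \<notin> M \<longrightarrow> w \<mu> = 0) \<and>
              v = (\<Sum>\<mu>\<in>M. w \<mu>))))
    \<and>
    (\<forall>\<mu> \<nu> (sA :: complex \<Rightarrow> 'a::ab_group_add \<Rightarrow> 'a) A Am A0 Ap
          (sB :: complex \<Rightarrow> 'b::ab_group_add \<Rightarrow> 'b) B Bm B0 Bp f.
       \<mu> \<noteq> \<nu> \<longrightarrow> gen_casimir_tffr \<mu> sA A Am A0 Ap \<longrightarrow> gen_casimir_tffr \<nu> sB B Bm B0 Bp \<longrightarrow>
       sl2_hom sA A Am A0 Ap sB B Bm B0 Bp f \<longrightarrow> (\<forall>v\<in>A. f v = 0))"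
proof (intro conjI allI impI ballI)
  fix s :: "complex \<Rightarrow> 'v::ab_group_add \<Rightarrow> 'v" and V Lm L0 Lp
  assume "tffr_module s V Lm L0 Lp"
  then interpret t: tffr s V Lm L0 Lp by (rule tffr_from)
  show "\<exists>M :: complex set. \<exists>W :: complex \<Rightarrow> 'v set.
          finite M \<and>
          (\<forall>\<mu>\<in>M. sl2_submodule s (W \<mu>) V Lm L0 Lp \<and> gen_casimir_tffr \<mu> s (W \<mu>) Lm L0 Lp) \<and>
          (\<forall>v\<in>V. \<exists>!w :: complex \<Rightarrow> 'v.
              (\<forall>\<mu>\<in>M. w \<mu> \<in> W \<mu>) \<and> (\<forall>\<mu>. \<mu> \<notin> M \<longrightarrow> w \<mu> = 0) \<and>
              v = (\<Sum>\<mu>\<in>M. w \<mu>))"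
    by (rule t.decomposition)
next
  fix \<mu> \<nu> and sA :: "complex \<Rightarrow> 'a::ab_group_add \<Rightarrow> 'a" and A Am A0 Ap
    and sB :: "complex \<Rightarrow> 'b::ab_group_add \<Rightarrow> 'b" and B Bm B0 Bp f v
  assume "\<mu> \<noteq> \<nu>" "gen_casimir_tffr \<mu> sA A Am A0 Ap" "gen_casimir_tffr \<nu> sB B Bm B0 Bp"
    "sl2_hom sA A Am A0 Ap sB B Bm B0 Bp f" "v \<in> A"
  then show "f v = 0" by (rule hom_zero)
qed

end
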